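(* Let $\mathcal{H}$ be a hypertree and $u,v$ two vertices of it. Then $uv$ is an edge of some host tree of $\mathcal{H}$ if and only if $u$ and $v$ lie in different connected components of the 2-section of $\overline{\mathcal{H}_{uv}}$.
   Context: A hypergraph $\mathcal{H}$ has a finite vertex set $V(\mathcal{H})$ and a finite family of nonempty subsets (edges). A host tree is a tree on $V(\mathcal{H})$ in which every edge induces a connected subgraph; a hypertree is a hypergraph with a host tree. For $A\subseteq V(\mathcal{H})$, $\overline{\mathcal{H}_A}$ is the hypergraph on $V(\mathcal{H})$ whose edges are the edges of $\mathcal{H}$ not containing $A$; $\overline{\mathcal{H}_{uv}}=\overline{\mathcal{H}_{\{u,v\}}}$. The 2-section of a hypergraph is the graph on its vertex set in which two distinct vertices are adjacent iff some edge contains both. *)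

theory Defs
  imports Main
begin

definition hypergraph :: "'a set \<Rightarrow> 'a set set \<Rightarrow> bool" where
  "hypergraph V Es \<longleftrightarrow> finite V \<and> finite Es \<and> (\<forall>e\<in>Es. e \<noteq> {} \<and> e \<subseteq> V)"

definition is_graph :: "'a set \<Rightarrow> 'a set set \<Rightarrow> bool" where
  "is_graph V T \<longleftrightarrow> (\<forall>e\<in>T. \<exists>x y. e = {x, y} \<and> x \<noteq> y \<and> x \<in> V \<and> y \<in> V)"

definition connected_on :: "'a set set \<Rightarrow> 'a set \<Rightarrow> bool" where
  "connected_on T S \<longleftrightarrow>
     (\<forall>x\<in>S. \<forall>y\<in>S. (x, y) \<in> {(a, b). {a, b} \<in> T \<and> a \<in> S \<and> b \<in> S}\<^sup>*)"

definition is_cycle :: "'a set set \<Rightarrow> 'a list \<Rightarrow> bool" where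
  "is_cycle T xs \<longleftrightarrow> 3 \<le> length xs \<and> distinct xs \<and>
     (\<forall>i < length xs. {xs ! i, xs ! ((i + 1) mod length xs)} \<in> T)"

definition is_tree :: "'a set \<Rightarrow> 'a set set \<Rightarrow> bool" where
  "is_tree V T \<longleftrightarrow> is_graph V T \<and> connected_on T V \<and> \<not> (\<exists>xs. is_cycle T xs)"

definition host_tree :: "'a set \<Rightarrow> 'a set set \<Rightarrow> 'a set set \<Rightarrow> bool" where
  "host_tree V Es T \<longleftrightarrow> is_tree V T \<and> (\<forall>e\<in>Es. connected_on T e)"

definition hypertree :: "'a set \<Rightarrow> 'a set set \<Rightarrow> bool" where
  "hypertree V Es \<longleftrightarrow> hypergraph V Es \<and> (\<exists>T. host_tree V Es T)"

text \<open>Edges of the hypergraph \<open>\<overline>H_A\<close>: edges not containing A (vertex set unchanged).\<close>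
definition edges_avoiding :: "'a set set \<Rightarrow> 'a set \<Rightarrow> 'a set set" where
  "edges_avoiding Es A = {e \<in> Es. \<not> A \<subseteq> e}"

definition two_section_adj :: "'a set \<Rightarrow> 'a set set \<Rightarrow> 'a \<Rightarrow> 'a \<Rightarrow> bool" where
  "two_section_adj V Es x y \<longleftrightarrow> x \<in> V \<and> y \<in> V \<and> x \<noteq> y \<and> (\<exists>e\<in>Es. x \<in> e \<and> y \<in> e)"

definition same_component :: "'a set \<Rightarrow> 'a set set \<Rightarrow> 'a \<Rightarrow> 'a \<Rightarrow> bool" where
  "same_component V Es x y \<longleftrightarrow> (x, y) \<in> {(a, b). two_section_adj V Es a b}\<^sup>*"

end

theory Submission
  imports Defs "HOL-Library.Transitive_Closure_Table"
begin

definition Ind :: "'a set set \<Rightarrow> 'a set \<Rightarrow> ('a \<times> 'a) set" where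
  "Ind T S = {(a, b). {a, b} \<in> T \<and> a \<in> S \<and> b \<in> S}"

lemma conn_Ind: "connected_on T S \<longleftrightarrow> (\<forall>x\<in>S. \<forall>y\<in>S. (x, y) \<in> (Ind T S)\<^sup>*)"
  unfolding connected_on_def Ind_def by simp

lemma Ind_sym: "(a, b) \<in> Ind T S \<Longrightarrow> (b, a) \<in> Ind T S"
  by (auto simp: Ind_def insert_commute)

lemma Ind_rt_sym: "(a, b) \<in> (Ind T S)\<^sup>* \<Longrightarrow> (b, a) \<in> (Ind T S)\<^sup>*"
proof (induction rule: rtrancl_induct)
  case base then show ?case by simp
next
  case (step y z)
  show ?case using converse_rtrancl_into_rtrancl[OF Ind_sym[OF step(2)] step(3)] .
qed

lemma Ind_mono: "T \<subseteq> T' \<Longrightarrow> S \<subseteq> S' \<Longrightarrow> Ind T S \<subseteq> Ind T' S'"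
  by (auto simp: Ind_def)

lemma Ind_rt_mono:
  assumes "T \<subseteq> T'" "S \<subseteq> S'" "p \<in> (Ind T S)\<^sup>*" shows "p \<in> (Ind T' S')\<^sup>*"
  using subsetD[OF rtrancl_mono[OF Ind_mono[OF assms(1,2)]] assms(3)] .

lemma Ind_graph: "is_graph V T \<Longrightarrow> Ind T V = Ind T UNIV"
  unfolding Ind_def is_graph_def by (auto simp: doubleton_eq_iff)

lemma simple_path:
  assumes "(a, b) \<in> R\<^sup>*"
  shows "\<exists>L. distinct L \<and> L \<noteq> [] \<and> L ! 0 = a \<and> L ! (length L - 1) = b \<and>
            (\<forall>k. Suc k < length L \<longrightarrow> (L ! k, L ! Suc k) \<in> R)"
proof -
  have "(\<lambda>x y. (x, y) \<in> R)\<^sup>*\<^sup>* a b" using assms by (simp add: rtranclp_rtrancl_eq)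
  then obtain xs where xs: "rtrancl_path (\<lambda>x y. (x, y) \<in> R) a xs b"
    unfolding rtranclp_eq_rtrancl_path by blast
  obtain ys where p: "rtrancl_path (\<lambda>x y. (x, y) \<in> R) a ys b" and d: "distinct (a # ys)"
    using rtrancl_path_distinct[OF xs] by blast
  have l: "(a # ys) ! (length (a # ys) - 1) = b"
  proof (cases "ys = []")
    case True
    then show ?thesis using p by (auto elim: rtrancl_path.cases)
  next
    case False
    then show ?thesis using rtrancl_path_last[OF p False] by (simp add: last_conv_nth)
  qed
  have st: "\<forall>k. Suc k < length (a # ys) \<longrightarrow> ((a # ys) ! k, (a # ys) ! Suc k) \<in> R"
  proof (intro allI impI)
    fix k assume "Suc k < length (a # ys)"
    then have "k < length ys" by simp
    from rtrancl_path_nth[OF p this] show "((a # ys) ! k, (a # ys) ! Suc k) \<in> R" by simp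
  qed
  show ?thesis
  proof (rule exI[of _ "a # ys"], intro conjI)
    show "distinct (a # ys)" by (rule d)
    show "a # ys \<noteq> []" by simp
    show "(a # ys) ! 0 = a" by simp
    show "(a # ys) ! (length (a # ys) - 1) = b" by (rule l)
    show "\<forall>k. Suc k < length (a # ys) \<longrightarrow> ((a # ys) ! k, (a # ys) ! Suc k) \<in> R" by (rule st)
  qed
qed


lemma chain_rt:
  assumes "\<forall>k. i \<le> k \<and> k < j \<longrightarrow> (L ! k, L ! Suc k) \<in> R" "i \<le> j"
  shows "(L ! i, L ! j) \<in> R\<^sup>*"
  using assms
proof (induction j)
  case 0 then show ?case by simp
next
  case (Suc j)
  show ?case
  proof (cases "i = Suc j")
    case True then show ?thesis by simp
  next
    case False
    then have "(L ! i, L ! j) \<in> R\<^sup>*" using Suc by auto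
    moreover have "(L ! j, L ! Suc j) \<in> R" using Suc False by auto
    ultimately show ?thesis by simp
  qed
qed

lemma crossing:
  "P (f 0) \<Longrightarrow> \<not> P (f m) \<Longrightarrow> \<exists>i<m. P (f i) \<and> \<not> P (f (Suc i))"
proof (induction m)
  case 0 then show ?case by simp
next
  case (Suc m)
  then show ?case by (cases "P (f m)") (auto intro: less_SucI)
qed

lemma no_bypass:
  assumes "\<not> (\<exists>xs. is_cycle T xs)" "{x, y} \<in> T" "x \<noteq> y"
  shows "(x, y) \<notin> (Ind (T - {{x, y}}) UNIV)\<^sup>*"
proof
  assume "(x, y) \<in> (Ind (T - {{x, y}}) UNIV)\<^sup>*"
  then obtain L where d: "distinct L" "L \<noteq> []" "L ! 0 = x" "L ! (length L - 1) = y"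
    and st: "\<forall>k. Suc k < length L \<longrightarrow> (L ! k, L ! Suc k) \<in> Ind (T - {{x, y}}) UNIV"
    using simple_path[OF \<open>(x, y) \<in> (Ind (T - {{x, y}}) UNIV)\<^sup>*\<close>] by blast
  define n where "n = length L"
  have "n \<noteq> 1"
  proof
    assume "n = 1"
    then have "length L - 1 = 0" using n_def by simp
    then show False using d assms(3) by simp
  qed
  moreover have "n \<noteq> 2"
  proof
    assume "n = 2"
    then have "(L ! 0, L ! 1) \<in> Ind (T - {{x, y}}) UNIV" using st n_def by auto
    then show False using d \<open>n = 2\<close> n_def by (auto simp: Ind_def)
  qed
  moreover have "n \<noteq> 0" using d n_def by simp
  ultimately have n3: "3 \<le> n" by linarith
  have "is_cycle T L"
    unfolding is_cycle_def
  proof (intro conjI allI impI)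
    show "3 \<le> length L" using n3 n_def by simp
    show "distinct L" using d by simp
    fix i assume i: "i < length L"
    show "{L ! i, L ! ((i + 1) mod length L)} \<in> T"
    proof (cases "Suc i < length L")
      case True
      then have "(i + 1) mod length L = Suc i" by simp
      then show ?thesis using st True by (auto simp: Ind_def)
    next
      case False
      then have "i + 1 = length L" using i by simp
      then have "i = length L - 1" "(i + 1) mod length L = 0" by auto
      then show ?thesis using d assms(2) by (simp add: insert_commute)
    qed
  qed
  then show False using assms(1) by blast
qed

lemma edge_distinct_arith:
  fixes i k n :: nat
  assumes "3 \<le> n" "k < n" "i < n" "k = (i + 1) mod n" "(k + 1) mod n = i"
  shows False
proof (cases "i + 1 < n")
  case True
  then have "k = i + 1" using assms by simp
  show False
  proof (cases "k + 1 < n")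
    case True then show False using assms \<open>k = i + 1\<close> by simp
  next
    case False
    then have "k + 1 = n" using assms(2) by linarith
    then have "i = 0" using assms by simp
    then show False using assms \<open>k = i + 1\<close> \<open>k + 1 = n\<close> by simp
  qed
next
  case False
  then have "i + 1 = n" using assms by simp
  then have "k = 0" using assms by simp
  then have "i = 1" using assms by simp
  then show False using assms \<open>i + 1 = n\<close> by simp
qed

lemma edge_distinct:
  assumes "distinct xs" "3 \<le> length xs" "k < length xs" "i < length xs" "k \<noteq> i"
  shows "{xs ! k, xs ! ((k + 1) mod length xs)} \<noteq> {xs ! i, xs ! ((i + 1) mod length xs)}"
proof
  let ?n = "length xs"
  assume eq: "{xs ! k, xs ! ((k + 1) mod ?n)} = {xs ! i, xs ! ((i + 1) mod ?n)}"
  have "0 < ?n" using assms by linarith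
  then have m: "(k + 1) mod ?n < ?n" "(i + 1) mod ?n < ?n" by simp_all
  have "xs ! k \<noteq> xs ! i" using nth_eq_iff_index_eq[OF assms(1,3,4)] assms(5) by simp
  then have "xs ! k = xs ! ((i + 1) mod ?n) \<and> xs ! ((k + 1) mod ?n) = xs ! i"
    using eq by (auto simp: doubleton_eq_iff)
  then have "k = (i + 1) mod ?n" "(k + 1) mod ?n = i"
    using nth_eq_iff_index_eq[OF assms(1) assms(3) m(2)] nth_eq_iff_index_eq[OF assms(1) m(1) assms(4)] by simp_all
  then show False using edge_distinct_arith[of ?n k i] assms by blast
qed

lemma cycle_bypass:
  assumes c: "is_cycle F xs" and i: "i < length xs"
  defines "e \<equiv> {xs ! i, xs ! ((i + 1) mod length xs)}"
  shows "(xs ! i, xs ! ((i + 1) mod length xs)) \<in> (Ind (F - {e}) UNIV)\<^sup>*"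
proof -
  let ?n = "length xs"
  let ?R = "Ind (F - {e}) UNIV"
  have n3: "3 \<le> ?n" and d: "distinct xs" using c by (auto simp: is_cycle_def)
  have stp: "(xs ! k, xs ! ((k + 1) mod ?n)) \<in> ?R" if "k < ?n" "k \<noteq> i" for k
    using edge_distinct[OF d n3 that(1) i that(2)] c that
    unfolding is_cycle_def Ind_def e_def by auto
  have stp2: "(xs ! k, xs ! Suc k) \<in> ?R" if "Suc k < ?n" "k \<noteq> i" for k
    using stp[of k] that by simp
  show ?thesis
  proof (cases "i = ?n - 1")
    case True
    have "i + 1 = ?n" using True n3 by simp
    then have "(i + 1) mod ?n = 0" by simp
    have c0: "(xs ! 0, xs ! (?n - 1)) \<in> ?R\<^sup>*"
      by (rule chain_rt) (use stp2 True in auto)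
    show ?thesis using Ind_rt_sym[OF c0] \<open>(i + 1) mod ?n = 0\<close> True by simp
  next
    case False
    then have m: "(i + 1) mod ?n = Suc i" using i by simp
    have a: "(xs ! 0, xs ! i) \<in> ?R\<^sup>*"
      by (rule chain_rt) (use stp2 i in auto)
    have b: "(xs ! Suc i, xs ! (?n - 1)) \<in> ?R\<^sup>*"
      by (rule chain_rt) (use stp2 i False in auto)
    have "Suc (?n - 1) = ?n" using n3 by simp
    then have cc: "(xs ! (?n - 1), xs ! 0) \<in> ?R"
      using stp[of "?n - 1"] False n3 by simp
    have c1: "(xs ! Suc i, xs ! i) \<in> ?R\<^sup>*" using rtrancl_trans[OF rtrancl_into_rtrancl[OF b cc] a] .
    show ?thesis using Ind_rt_sym[OF c1] m by simp
  qed
qed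

lemma split_side:
  assumes "(a, x) \<in> (Ind T S)\<^sup>*"
  shows "(a, x) \<in> (Ind (T - {{x, y}}) S)\<^sup>* \<or> (a, y) \<in> (Ind (T - {{x, y}}) S)\<^sup>*"
  using assms
proof (induction rule: converse_rtrancl_induct)
  case base then show ?case by simp
next
  case (step a b)
  show ?case
  proof (cases "{a, b} = {x, y}")
    case True
    then have "a = x \<or> a = y" by (auto simp: doubleton_eq_iff)
    then show ?thesis by auto
  next
    case False
    then have ab: "(a, b) \<in> Ind (T - {{x, y}}) S" using step(1) by (auto simp: Ind_def)
    show ?thesis using step(3) converse_rtrancl_into_rtrancl[OF ab] by blast
  qed
qed

lemma dnth: "distinct L \<Longrightarrow> a < length L \<Longrightarrow> b < length L \<Longrightarrow> a \<noteq> b \<Longrightarrow> L ! a \<noteq> L ! b"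
  by (simp add: nth_eq_iff_index_eq)

lemma forward:
  assumes h: "host_tree V Es T" and uv: "{u, v} \<in> T"
  shows "\<not> same_component V (edges_avoiding Es {u, v}) u v"
proof
  assume sc: "same_component V (edges_avoiding Es {u, v}) u v"
  have gr: "is_graph V T" and nc: "\<not> (\<exists>xs. is_cycle T xs)" and he: "\<forall>e\<in>Es. connected_on T e"
    using h by (auto simp: host_tree_def is_tree_def)
  have "u \<noteq> v"
  proof
    assume "u = v"
    then obtain p q where eq: "{u} = {p, q}" "p \<noteq> q" using gr uv unfolding is_graph_def by force
    then have "p \<in> {u}" "q \<in> {u}" by auto
    then show False using eq(2) by simp
  qed
  let ?R = "Ind (T - {{u, v}}) UNIV"
  have "(u, w) \<in> ?R\<^sup>*" if "(u, w) \<in> {(a, b). two_section_adj V (edges_avoiding Es {u, v}) a b}\<^sup>*" for w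
    using that
  proof (induction rule: rtrancl_induct)
    case base then show ?case by simp
  next
    case (step w w')
    then obtain e where e: "e \<in> Es" "\<not> {u, v} \<subseteq> e" "w \<in> e" "w' \<in> e"
      by (auto simp: two_section_adj_def edges_avoiding_def)
    then have ww: "(w, w') \<in> (Ind T e)\<^sup>*" using he by (auto simp: conn_Ind)
    have sub: "Ind T e \<subseteq> ?R" using e(2) by (auto simp: Ind_def doubleton_eq_iff)
    have "(w, w') \<in> ?R\<^sup>*" using subsetD[OF rtrancl_mono[OF sub] ww] .
    then show ?case using step(3) by simp
  qed
  then have "(u, v) \<in> ?R\<^sup>*" using sc by (simp add: same_component_def)
  then show False using no_bypass[OF nc uv \<open>u \<noteq> v\<close>] by simp
qed

lemma backward:
  assumes ht: "hypertree V Es" and uV: "u \<in> V" and vV: "v \<in> V"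
    and nsc: "\<not> same_component V (edges_avoiding Es {u, v}) u v"
  shows "\<exists>T. host_tree V Es T \<and> {u, v} \<in> T"
proof -
  obtain T0 where h0: "host_tree V Es T0" using ht by (auto simp: hypertree_def)
  show ?thesis
  proof (cases "{u, v} \<in> T0")
    case True then show ?thesis using h0 by blast
  next
    case False
    let ?Av = "edges_avoiding Es {u, v}"
    define C where "C = {w. same_component V ?Av u w}"
    have uC: "u \<in> C" by (simp add: C_def same_component_def)
    have vC: "v \<notin> C" using nsc by (simp add: C_def)
    have gr: "is_graph V T0" and nc: "\<not> (\<exists>xs. is_cycle T0 xs)" and cV: "connected_on T0 V"
      and he: "\<forall>e\<in>Es. connected_on T0 e"
      using h0 by (auto simp: host_tree_def is_tree_def)
    have "(u, v) \<in> (Ind T0 V)\<^sup>*" using cV uV vV by (auto simp: conn_Ind)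
    then obtain L where d: "distinct L" "L \<noteq> []" "L ! 0 = u" "L ! (length L - 1) = v"
      and st: "\<forall>k. Suc k < length L \<longrightarrow> (L ! k, L ! Suc k) \<in> Ind T0 V"
      using simple_path[OF \<open>(u, v) \<in> (Ind T0 V)\<^sup>*\<close>] by blast
    have L0: "L ! 0 \<in> C" using d(3) uC by simp
    have Ln: "L ! (length L - 1) \<notin> C" using d(4) vC by simp
    obtain i where i: "i < length L - 1" "L ! i \<in> C" "L ! Suc i \<notin> C"
      using crossing[of "\<lambda>w. w \<in> C" "\<lambda>k. L ! k" "length L - 1", OF L0 Ln] by blast
    define x where "x = L ! i"
    define y where "y = L ! Suc i"
    have xC: "x \<in> C" and yC: "y \<notin> C" using i x_def y_def by auto
    have si: "Suc i < length L" using i by simp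
    have xyI: "(x, y) \<in> Ind T0 V" unfolding x_def y_def using st si by blast
    then have xyT: "{x, y} \<in> T0" and xV: "x \<in> V" and yV: "y \<in> V" unfolding Ind_def by blast+
    have xy: "x \<noteq> y" using xC yC by blast
    let ?E' = "Ind (T0 - {{x, y}}) UNIV"
    have noxy: "(x, y) \<notin> ?E'\<^sup>*" using no_bypass[OF nc xyT xy] .
    have ux: "(u, x) \<in> ?E'\<^sup>*"
    proof -
      have "(L ! 0, L ! i) \<in> ?E'\<^sup>*"
      proof (rule chain_rt)
        show "\<forall>k. 0 \<le> k \<and> k < i \<longrightarrow> (L ! k, L ! Suc k) \<in> ?E'"
        proof (intro allI impI)
          fix k assume k: "0 \<le> k \<and> k < i"
          have "L ! k \<noteq> L ! i" "L ! k \<noteq> L ! Suc i"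
            using dnth[OF d(1), of k i] dnth[OF d(1), of k "Suc i"] k i by auto
          then have "{L ! k, L ! Suc k} \<noteq> {x, y}" using x_def y_def by (auto simp: doubleton_eq_iff)
          then show "(L ! k, L ! Suc k) \<in> ?E'" using st k i by (auto simp: Ind_def)
        qed
      qed simp
      then show ?thesis using d x_def by simp
    qed
    have yv: "(y, v) \<in> ?E'\<^sup>*"
    proof -
      have "(L ! Suc i, L ! (length L - 1)) \<in> ?E'\<^sup>*"
      proof (rule chain_rt)
        show "\<forall>k. Suc i \<le> k \<and> k < length L - 1 \<longrightarrow> (L ! k, L ! Suc k) \<in> ?E'"
        proof (intro allI impI)
          fix k assume k: "Suc i \<le> k \<and> k < length L - 1"
          have "L ! Suc k \<noteq> L ! i" "L ! Suc k \<noteq> L ! Suc i"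
          proof -
            have "Suc k < length L" using k by linarith
            then show "L ! Suc k \<noteq> L ! i" "L ! Suc k \<noteq> L ! Suc i"
              using dnth[OF d(1), of "Suc k" i] dnth[OF d(1), of "Suc k" "Suc i"] k i by auto
          qed
          then have "{L ! k, L ! Suc k} \<noteq> {x, y}" using x_def y_def by (auto simp: doubleton_eq_iff)
          then show "(L ! k, L ! Suc k) \<in> ?E'" using st k i by (auto simp: Ind_def)
        qed
      qed (use i in simp)
      then show ?thesis using d y_def by simp
    qed
    have uv: "u \<noteq> v" using uC vC by auto
    define T' where "T' = insert {u, v} (T0 - {{x, y}})"
    let ?E = "Ind T' UNIV"
    have E'E: "?E' \<subseteq> ?E" by (rule Ind_mono) (auto simp: T'_def)
    have uvE: "(u, v) \<in> ?E" by (simp add: T'_def Ind_def)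
    have grT': "is_graph V T'" using gr uV vV uv by (auto simp: T'_def is_graph_def)
    have xyE: "(x, y) \<in> ?E\<^sup>*"
    proof -
      have xu: "(x, u) \<in> ?E\<^sup>*" using subsetD[OF rtrancl_mono[OF E'E] Ind_rt_sym[OF ux]] .
      have vy: "(v, y) \<in> ?E\<^sup>*" using subsetD[OF rtrancl_mono[OF E'E] Ind_rt_sym[OF yv]] .
      show ?thesis using rtrancl_trans[OF xu converse_rtrancl_into_rtrancl[OF uvE vy]] .
    qed
    have conn: "connected_on T' V"
    proof -
      have tox: "(a, x) \<in> ?E\<^sup>*" if "a \<in> V" for a
      proof -
        have "(a, x) \<in> (Ind T0 V)\<^sup>*" using cV that xV by (auto simp: conn_Ind)
        then have "(a, x) \<in> (Ind (T0 - {{x, y}}) V)\<^sup>* \<or> (a, y) \<in> (Ind (T0 - {{x, y}}) V)\<^sup>*"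
          by (rule split_side)
        then have "(a, x) \<in> ?E\<^sup>* \<or> (a, y) \<in> ?E\<^sup>*"
          using Ind_rt_mono[of "T0 - {{x, y}}" T' V UNIV] by (auto simp: T'_def)
        then show ?thesis using rtrancl_trans[OF _ Ind_rt_sym[OF xyE]] by blast
      qed
      show ?thesis unfolding conn_Ind Ind_graph[OF grT']
        using rtrancl_trans[OF tox Ind_rt_sym[OF tox]] by blast
    qed
    have acyc: "\<not> (\<exists>xs. is_cycle T' xs)"
    proof
      assume "\<exists>xs. is_cycle T' xs"
      then obtain xs where c: "is_cycle T' xs" by blast
      show False
      proof (cases "\<exists>i < length xs. {xs ! i, xs ! ((i + 1) mod length xs)} = {u, v}")
        case False
        then have "is_cycle T0 xs" using c by (auto simp: is_cycle_def T'_def)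
        then show False using nc by blast
      next
        case True
        then obtain j where j: "j < length xs" "{xs ! j, xs ! ((j + 1) mod length xs)} = {u, v}" by blast
        have "(xs ! j, xs ! ((j + 1) mod length xs)) \<in> (Ind (T' - {{u, v}}) UNIV)\<^sup>*"
          using cycle_bypass[OF c j(1)] j(2) by simp
        then have "(xs ! j, xs ! ((j + 1) mod length xs)) \<in> ?E'\<^sup>*"
          using Ind_rt_mono[of "T' - {{u, v}}" "T0 - {{x, y}}" UNIV UNIV] by (auto simp: T'_def)
        then have "(u, v) \<in> ?E'\<^sup>*" using j(2) Ind_rt_sym by (auto simp: doubleton_eq_iff)
        then have "(x, y) \<in> ?E'\<^sup>*" using rtrancl_trans[OF rtrancl_trans[OF Ind_rt_sym[OF ux]] Ind_rt_sym[OF yv]] by blast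
        then show False using noxy by simp
      qed
    qed
    have edges: "connected_on T' e" if eE: "e \<in> Es" for e
    proof -
      have c0: "\<forall>a\<in>e. \<forall>b\<in>e. (a, b) \<in> (Ind T0 e)\<^sup>*" using he eE by (simp add: conn_Ind)
      show ?thesis
      proof (cases "x \<in> e \<and> y \<in> e")
        case False
        have sub: "Ind T0 e \<subseteq> Ind T' e" using False by (auto simp: Ind_def T'_def doubleton_eq_iff)
        show ?thesis unfolding conn_Ind
        proof (intro ballI)
          fix a b assume "a \<in> e" "b \<in> e"
          then have "(a, b) \<in> (Ind T0 e)\<^sup>*" using c0 by blast
          then show "(a, b) \<in> (Ind T' e)\<^sup>*" using subsetD[OF rtrancl_mono[OF sub]] by blast
        qed
      next
        case True
        have uve: "u \<in> e" "v \<in> e"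
        proof -
          have "{u, v} \<subseteq> e"
          proof (rule ccontr)
            assume "\<not> {u, v} \<subseteq> e"
            then have "e \<in> ?Av" using eE by (simp add: edges_avoiding_def)
            then have "two_section_adj V ?Av x y" using True xV yV xy by (auto simp: two_section_adj_def)
            then have "y \<in> C" using xC unfolding C_def same_component_def
              by (simp add: rtrancl.rtrancl_into_rtrancl)
            then show False using yC by simp
          qed
          then show "u \<in> e" "v \<in> e" by auto
        qed
        let ?Fe = "Ind (T0 - {{x, y}}) e"
        let ?G = "Ind T' e"
        have FeG: "?Fe \<subseteq> ?G" by (rule Ind_mono) (auto simp: T'_def)
        have FeE: "?Fe \<subseteq> ?E'" by (rule Ind_mono) auto
        have side: "(a, x) \<in> ?Fe\<^sup>* \<or> (a, y) \<in> ?Fe\<^sup>*" if "a \<in> e" for a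
        proof -
          have "(a, x) \<in> (Ind T0 e)\<^sup>*" using c0 that True by blast
          then show ?thesis by (rule split_side)
        qed
        have ux': "(u, x) \<in> ?Fe\<^sup>*"
        proof (rule ccontr)
          assume "(u, x) \<notin> ?Fe\<^sup>*"
          then have "(u, y) \<in> ?Fe\<^sup>*" using side uve by auto
          then have "(u, y) \<in> ?E'\<^sup>*" using subsetD[OF rtrancl_mono[OF FeE]] by blast
          then have "(x, y) \<in> ?E'\<^sup>*" using rtrancl_trans[OF Ind_rt_sym[OF ux]] by blast
          then show False using noxy by simp
        qed
        have vy': "(v, y) \<in> ?Fe\<^sup>*"
        proof (rule ccontr)
          assume "(v, y) \<notin> ?Fe\<^sup>*"
          then have "(v, x) \<in> ?Fe\<^sup>*" using side uve by auto
          then have "(v, x) \<in> ?E'\<^sup>*" using subsetD[OF rtrancl_mono[OF FeE]] by blast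
          then have "(y, x) \<in> ?E'\<^sup>*" using yv by (rule rtrancl_trans[rotated])
          then have "(x, y) \<in> ?E'\<^sup>*" by (rule Ind_rt_sym)
          then show False using noxy by simp
        qed
        have uvG: "(u, v) \<in> ?G" using uve by (simp add: T'_def Ind_def)
        have xuG: "(x, u) \<in> ?G\<^sup>*" using Ind_rt_sym[OF rtrancl_mono[OF FeG, THEN subsetD, OF ux']] .
        have vyG: "(v, y) \<in> ?G\<^sup>*" using rtrancl_mono[OF FeG, THEN subsetD, OF vy'] .
        have xyG: "(x, y) \<in> ?G\<^sup>*"
          using rtrancl_trans[OF xuG converse_rtrancl_into_rtrancl[OF uvG vyG]] .
        have tox: "(a, x) \<in> ?G\<^sup>*" if "a \<in> e" for a
        proof -
          have "(a, x) \<in> ?G\<^sup>* \<or> (a, y) \<in> ?G\<^sup>*"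
            using side[OF that] subsetD[OF rtrancl_mono[OF FeG]] by blast
          then show ?thesis using rtrancl_trans[OF _ Ind_rt_sym[OF xyG]] by blast
        qed
        show ?thesis unfolding conn_Ind
        proof (intro ballI)
          fix a b assume "a \<in> e" "b \<in> e"
          then show "(a, b) \<in> (Ind T' e)\<^sup>*"
            using rtrancl_trans[OF tox[of a] Ind_rt_sym[OF tox[of b]]] by blast
        qed
      qed
    qed
    have ae: "\<forall>e\<in>Es. connected_on T' e" using edges by blast
    have "host_tree V Es T'"
      unfolding host_tree_def is_tree_def using grT' conn acyc ae by simp
    moreover have "{u, v} \<in> T'" unfolding T'_def by blast
    ultimately show ?thesis by blast
  qed
qed

theorem mainTheorem10:
  fixes V :: "'a set" and Es :: "'a set set" and u v :: 'a
  assumes "hypertree V Es" and "u \<in> V" and "v \<in> V"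
  shows "(\<exists>T. host_tree V Es T \<and> {u, v} \<in> T) \<longleftrightarrow>
         \<not> same_component V (edges_avoiding Es {u, v}) u v"
proof
  assume "\<exists>T. host_tree V Es T \<and> {u, v} \<in> T"
  then obtain T where "host_tree V Es T" "{u, v} \<in> T" by blast
  then show "\<not> same_component V (edges_avoiding Es {u, v}) u v" by (rule forward)
next
  assume "\<not> same_component V (edges_avoiding Es {u, v}) u v"
  then show "\<exists>T. host_tree V Es T \<and> {u, v} \<in> T" by (rule backward[OF assms])
qed

end
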